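(* Let $r\in\mathbb N$ and let $M$ be the sub-add move matrix. Every vertex in $\mathcal P_0$ has no parent in $\Gamma_{M,\,2^r}$.
   Context: The sub-add move matrix is $M=\begin{pmatrix}1&-1\\1&1\end{pmatrix}$. For $n\in\mathbb N$, $\Gamma_{M,\,n}$ is the directed graph with vertex set $\mathbb Z_n^2$ and arcs $((a,b),(a-b,a+b))$ for all $(a,b)\in\mathbb Z_n^2$ (computed mod $n$). If $({\bf v},{\bf w})$ is an arc, ${\bf v}$ is a parent of ${\bf w}$. $\mathcal P_0$ is the set of $(x,y)\in\mathbb Z_{2^r}^2$ such that exactly one of $x,y$ is odd (parity of elements of $\mathbb Z_{2^r}$ being well defined). *)

theory Defs
  imports Main
begin

(* Z_n is represented by the canonical residues {0..<n} in int. *)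
definition Zn2 :: "nat \<Rightarrow> (int \<times> int) set" where
  "Zn2 n = {(a, b). 0 \<le> a \<and> a < int n \<and> 0 \<le> b \<and> b < int n}"

(* A 2x2 integer matrix given by its entries m i j, i,j \<in> {0,1} *)
definition subadd_M :: "nat \<Rightarrow> nat \<Rightarrow> int" where
  "subadd_M i j = (if i = 0 \<and> j = 1 then -1 else 1)"

definition move :: "(nat \<Rightarrow> nat \<Rightarrow> int) \<Rightarrow> nat \<Rightarrow> int \<times> int \<Rightarrow> int \<times> int" where
  "move M n v = ((M 0 0 * fst v + M 0 1 * snd v) mod int n,
                 (M 1 0 * fst v + M 1 1 * snd v) mod int n)"

definition is_arc :: "(nat \<Rightarrow> nat \<Rightarrow> int) \<Rightarrow> nat \<Rightarrow> int \<times> int \<Rightarrow> int \<times> int \<Rightarrow> bool" where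
  "is_arc M n v w \<longleftrightarrow> v \<in> Zn2 n \<and> w \<in> Zn2 n \<and> w = move M n v"

definition is_parent :: "(nat \<Rightarrow> nat \<Rightarrow> int) \<Rightarrow> nat \<Rightarrow> int \<times> int \<Rightarrow> int \<times> int \<Rightarrow> bool" where
  "is_parent M n v w \<longleftrightarrow> is_arc M n v w"

definition P0 :: "nat \<Rightarrow> (int \<times> int) set" where
  "P0 r = {(x, y). (x, y) \<in> Zn2 (2 ^ r) \<and> (odd x \<noteq> odd y)}"

end

theory Submission
  imports Defs
begin

lemma odd_mod_pow2:
  fixes x :: int
  assumes "r > 0"
  shows "odd (x mod 2 ^ r) = odd x"
proof -
  have "x mod 2 ^ r = x - 2 ^ r * (x div 2 ^ r)" by (simp add: minus_div_mult_eq_mod [symmetric])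
  moreover have "even ((2::int) ^ r)" using assms by simp
  then have "even (2 ^ r * (x div 2 ^ r))" by simp
  ultimately show ?thesis by simp
qed

theorem proposition5p3:
  fixes r :: nat
  shows "\<forall>w \<in> P0 r. \<not> (\<exists>v. is_parent subadd_M (2 ^ r) v w)"
proof (intro ballI notI)
  fix w assume w: "w \<in> P0 r" and "\<exists>v. is_parent subadd_M (2 ^ r) v w"
  then obtain a b where ab: "w = move subadd_M (2 ^ r) (a, b)"
    by (auto simp: is_parent_def is_arc_def)
  obtain x y where xy: "w = (x, y)" by force
  have x: "x = (a - b) mod 2 ^ r" and y: "y = (a + b) mod 2 ^ r"
    using ab xy by (auto simp: move_def subadd_M_def)
  from w xy have in0: "0 \<le> x" "x < 2 ^ r" "0 \<le> y" "y < 2 ^ r" and par: "odd x \<noteq> odd y"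
    by (auto simp: P0_def Zn2_def)
  show False
  proof (cases "r = 0")
    case True
    then have "x = 0" "y = 0" using in0 by auto
    then show False using par by simp
  next
    case False
    then have "odd x = odd (a - b)" "odd y = odd (a + b)"
      using x y odd_mod_pow2 by auto
    moreover have "odd (a - b) = odd (a + b)" by (metis even_add even_diff)
    ultimately show False using par by simp
  qed
qed

end
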